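(* Let $P_0=\mathrm{SO}(5)\times_{\phi_0}\mathrm{SO}(3)\cong V^{5,2}\times\mathrm{SO}(3)$ be the homogeneous $\mathrm{SO}(3)$-principal bundle over $V^{5,2}=\mathrm{SO}(5)/\mathrm{SO}(3)$ induced by the trivial homomorphism $\phi_0:\mathrm{SO}(3)\to\mathrm{SO}(3)$. The $\mathrm{SO}(5)$-invariant connections on $P_0$ are exactly those corresponding to linear maps $\alpha:\mathfrak{so}(5)\to\mathfrak{so}(3)$ of the form $$\alpha=e^1\otimes(b_8e_8+b_9e_9+b_{10}e_{10}),\qquad b_8,b_9,b_{10}\in\mathbb{R}.$$ Furthermore, the curvature $F_\alpha$ of such a connection lies in $\Omega^2_1(\mathfrak{so}(3))$, i.e. it is of the form $\omega\otimes v$ times a constant for a fixed $v\in\mathfrak{so}(3)$, where $\omega$ is the invariant 2-form corresponding to $e^{25}+e^{36}+e^{47}$.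
   Context: Basis of $\mathfrak{so}(5)$ (with $E_{ij}$ the elementary $5\times5$ matrices): $e_1=E_{12}-E_{21}$, $e_2=E_{13}-E_{31}$, $e_3=E_{14}-E_{41}$, $e_4=E_{15}-E_{51}$, $e_5=E_{23}-E_{32}$, $e_6=E_{24}-E_{42}$, $e_7=E_{25}-E_{52}$, $e_8=E_{34}-E_{43}$, $e_9=E_{35}-E_{53}$, $e_{10}=E_{54}-E_{45}$; bracket = commutator. $\mathrm{SO}(3)\subset\mathrm{SO}(5)$ has Lie algebra $\mathfrak{so}(3)=\mathrm{span}\{e_8,e_9,e_{10}\}$; the target group $\mathrm{SO}(3)$ is identified with this subgroup. $e^1,\dots,e^{10}$ is the dual basis of $\mathfrak{so}(5)^*$. For a homomorphism $\phi:H\to K$, $P=G\times_\phi K\to G/H$ is a homogeneous $K$-bundle, and $G$-invariant connections on $P$ correspond bijectively to linear maps $\alpha:\mathfrak g\to\mathfrak k$ with $\alpha|_{\mathfrak h}=\phi_*$ and $\alpha\circ\mathrm{Ad}(h)=\mathrm{Ad}(\phi(h))\circ\alpha$ for all $h\in H$ (Wang's theorem). The curvature of the connection is the invariant $\mathfrak k$-valued 2-form given on $\mathfrak m=\mathrm{span}\{e_1,\dots,e_7\}$ by $F(X,Y)=[\alpha X,\alpha Y]-\alpha([X,Y])$. $\Omega^2_1(\mathfrak{so}(3))$ denotes $\mathfrak{so}(3)$-valued 2-forms of the form $f\,\omega$ with $\omega=e^{25}+e^{36}+e^{47}$ (the transverse Kähler form line in the $\mathrm{SU}(3)$-decomposition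 $\Omega^2_1\oplus\Omega^2_6\oplus\Omega^2_8$ of transverse 2-forms). *)

theory Defs
  imports "HOL-Analysis.Analysis" "HOL-Library.Numeral_Type"
begin

type_synonym mat5 = "real^5^5"

text \<open>Matrix indices 1..5 are mapped bijectively onto the index type 5
  (index k corresponds to of_nat k, so 5 corresponds to 0).\<close>
definition idx :: "nat \<Rightarrow> 5" where "idx k = of_nat k"

definition Emat :: "nat \<Rightarrow> nat \<Rightarrow> mat5" where
  "Emat i j = (\<chi> a b. if a = idx i \<and> b = idx j then 1 else 0)"

definition ent :: "mat5 \<Rightarrow> nat \<Rightarrow> nat \<Rightarrow> real" where
  "ent X i j = X $ idx i $ idx j"

text \<open>Positions (i,j) with e_k = E_ij - E_ji.\<close>
definition bpos :: "nat \<Rightarrow> nat \<times> nat" where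
  "bpos k = (if k = 1 then (1,2) else if k = 2 then (1,3) else if k = 3 then (1,4)
     else if k = 4 then (1,5) else if k = 5 then (2,3) else if k = 6 then (2,4)
     else if k = 7 then (2,5) else if k = 8 then (3,4) else if k = 9 then (3,5)
     else (5,4))"

definition ebas :: "nat \<Rightarrow> mat5" where
  "ebas k = Emat (fst (bpos k)) (snd (bpos k)) - Emat (snd (bpos k)) (fst (bpos k))"

text \<open>Dual basis e^1..e^10 (coordinates w.r.t. e_1..e_10 on so(5)).\<close>
definition edual :: "nat \<Rightarrow> mat5 \<Rightarrow> real" where
  "edual k X = ent X (fst (bpos k)) (snd (bpos k))"

definition bracket :: "mat5 \<Rightarrow> mat5 \<Rightarrow> mat5" where
  "bracket X Y = X ** Y - Y ** X"

definition so5 :: "mat5 set" where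
  "so5 = span (ebas ` {1..10})"

definition so3 :: "mat5 set" where
  "so3 = span (ebas ` {8..10})"

definition mspace :: "mat5 set" where
  "mspace = span (ebas ` {1..7})"

text \<open>The group SO(5) and the subgroup SO(3) (acting on coordinates 3,4,5).\<close>
definition SO5 :: "mat5 set" where
  "SO5 = {g. orthogonal_matrix g \<and> det g = 1}"

definition SO3sub :: "mat5 set" where
  "SO3sub = {g \<in> SO5. g *v axis (idx 1) 1 = axis (idx 1) 1 \<and> g *v axis (idx 2) 1 = axis (idx 2) 1}"

definition Ad :: "mat5 \<Rightarrow> mat5 \<Rightarrow> mat5" where
  "Ad g X = g ** X ** matrix_inv g"

text \<open>Wang's condition for a linear map alpha : so(5) -> so(3) to define an
  SO(5)-invariant connection on SO(5) x_phi SO(3), with H = SO3sub,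
  phi : H -> SO(3) (subgroup of SO(5)) and phid its differential.\<close>
definition wang_connection ::
  "(mat5 \<Rightarrow> mat5) \<Rightarrow> (mat5 \<Rightarrow> mat5) \<Rightarrow> (mat5 \<Rightarrow> mat5) \<Rightarrow> bool" where
  "wang_connection \<phi> \<phi>d \<alpha> \<longleftrightarrow>
     (\<forall>X\<in>so3. \<alpha> X = \<phi>d X) \<and>
     (\<forall>h\<in>SO3sub. \<forall>X\<in>so5. \<alpha> (Ad h X) = Ad (\<phi> h) (\<alpha> X))"

text \<open>Trivial homomorphism phi_0 (identity of SO(3) is the 5x5 identity) and its differential.\<close>
definition phi0 :: "mat5 \<Rightarrow> mat5" where "phi0 h = mat 1"
definition phi0d :: "mat5 \<Rightarrow> mat5" where "phi0d X = 0"

definition curvature :: "(mat5 \<Rightarrow> mat5) \<Rightarrow> mat5 \<Rightarrow> mat5 \<Rightarrow> mat5" where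
  "curvature \<alpha> X Y = bracket (\<alpha> X) (\<alpha> Y) - \<alpha> (bracket X Y)"

definition wedge2 :: "nat \<Rightarrow> nat \<Rightarrow> mat5 \<Rightarrow> mat5 \<Rightarrow> real" where
  "wedge2 i j X Y = edual i X * edual j Y - edual j X * edual i Y"

definition omega :: "mat5 \<Rightarrow> mat5 \<Rightarrow> real" where
  "omega X Y = wedge2 2 5 X Y + wedge2 3 6 X Y + wedge2 4 7 X Y"

end

theory Submission
  imports Defs
begin
lemma exhaust_5:
  fixes x :: 5
  shows "x = 1 \<or> x = 2 \<or> x = 3 \<or> x = 4 \<or> x = 5"
proof (induct x)
  case (of_int z)
  then have "z = 0 \<or> z = 1 \<or> z = 2 \<or> z = 3 \<or> z = 4" by fastforce
  then show ?case by auto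
qed
lemma forall_5: "(\<forall>i::5. P i) \<longleftrightarrow> P 1 \<and> P 2 \<and> P 3 \<and> P 4 \<and> P 5"
  by (metis exhaust_5)
lemma UNIV_5: "(UNIV::5 set) = {1,2,3,4,5}" using exhaust_5 by auto
lemma idx_simps: "idx (Suc 0) = 1" "idx 1 = 1" "idx 2 = 2" "idx 3 = 3" "idx 4 = 4" "idx 5 = 5"
  by (simp_all add: idx_def)

definition skew :: "mat5 \<Rightarrow> bool" where "skew X \<longleftrightarrow> transpose X = - X"

lemma skew_ent: "skew X \<Longrightarrow> X$i$j = - X$j$i"
proof -
  assume "skew X"
  then have "transpose X $ j $ i = (- X) $ j $ i" unfolding skew_def by simp
  then show ?thesis by (simp add: transpose_def)
qed

lemma skew_insts: assumes "skew X" shows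
 "X$2$1 = - X$1$2" "X$3$1 = - X$1$3" "X$4$1 = - X$1$4" "X$5$1 = - X$1$5" "X$3$2 = - X$2$3" "X$4$2 = - X$2$4" "X$5$2 = - X$2$5" "X$4$3 = - X$3$4" "X$5$3 = - X$3$5" "X$4$5 = - X$5$4" "X$1$1 = 0" "X$2$2 = 0" "X$3$3 = 0" "X$4$4 = 0" "X$5$5 = 0"
  using skew_ent[OF assms, of 2 1] skew_ent[OF assms, of 3 1] skew_ent[OF assms, of 4 1] skew_ent[OF assms, of 5 1]
   skew_ent[OF assms, of 3 2] skew_ent[OF assms, of 4 2] skew_ent[OF assms, of 5 2] skew_ent[OF assms, of 4 3]
   skew_ent[OF assms, of 5 3] skew_ent[OF assms, of 4 5] skew_ent[OF assms, of 1 1] skew_ent[OF assms, of 2 2]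
   skew_ent[OF assms, of 3 3] skew_ent[OF assms, of 4 4] skew_ent[OF assms, of 5 5]
  by simp_all

lemma skew_decomp: assumes "skew X" shows
  "X = edual 1 X *\<^sub>R ebas 1 + edual 2 X *\<^sub>R ebas 2 + edual 3 X *\<^sub>R ebas 3 + edual 4 X *\<^sub>R ebas 4
     + edual 5 X *\<^sub>R ebas 5 + edual 6 X *\<^sub>R ebas 6 + edual 7 X *\<^sub>R ebas 7 + edual 8 X *\<^sub>R ebas 8
     + edual 9 X *\<^sub>R ebas 9 + edual 10 X *\<^sub>R ebas 10"
  unfolding vec_eq_iff forall_5
  by (simp add: skew_insts[OF assms] edual_def ent_def ebas_def Emat_def bpos_def idx_simps)

lemma Emat_transpose: "transpose (Emat i j) = Emat j i"
  unfolding Emat_def transpose_def vec_eq_iff by auto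

lemma transpose_diff': "transpose (A - B) = transpose A - (transpose B :: mat5)"
  unfolding transpose_def vec_eq_iff by auto

lemma ebas_skew: "skew (ebas k)"
  unfolding skew_def ebas_def transpose_diff' Emat_transpose by simp

lemma range10: "k \<in> {1..10::nat} \<Longrightarrow> k = 1 \<or> k = 2 \<or> k = 3 \<or> k = 4 \<or> k = 5 \<or> k = 6 \<or> k = 7 \<or> k = 8 \<or> k = 9 \<or> k = 10"
  unfolding atLeastAtMost_iff by presburger

lemma transpose_add': "transpose (A + B) = transpose A + (transpose B :: mat5)"
  unfolding transpose_def vec_eq_iff by auto
lemma transpose_neg': "transpose (- A) = - (transpose A :: mat5)"
  unfolding transpose_def vec_eq_iff by auto
lemma transpose_zero': "transpose (0::mat5) = 0"
  unfolding transpose_def vec_eq_iff by auto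

lemma skew_subspace: "subspace {X. skew X}"
  unfolding subspace_def skew_def mem_Collect_eq
  by (simp add: transpose_add' transpose_scalar transpose_zero')

lemma so5_skew: "X \<in> so5 \<Longrightarrow> skew X"
  unfolding so5_def
  by (rule span_induct[OF _ skew_subspace[unfolded mem_Collect_eq]]) (auto simp: ebas_skew)

lemma skew_so5: assumes "skew X" shows "X \<in> so5"
proof -
  have b: "\<And>k. k \<in> {1..10} \<Longrightarrow> ebas k \<in> so5" unfolding so5_def by (intro span_base) auto
  show ?thesis unfolding so5_def
    apply (subst skew_decomp[OF assms])
    by (intro span_add span_scale span_base; simp)
qed

lemma edual1_ebas: "k \<in> {1..10} \<Longrightarrow> edual 1 (ebas k) = (if k = 1 then 1 else 0)"
  apply (drule range10) apply (elim disjE) by (simp_all add: edual_def ent_def ebas_def Emat_def bpos_def idx_simps)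

lemma inv_unique: assumes "A ** B = mat 1" "B ** A = (mat 1 :: mat5)" shows "matrix_inv A = B"
proof -
  have ex: "A ** matrix_inv A = mat 1 \<and> matrix_inv A ** A = mat 1"
    unfolding matrix_inv_def by (rule someI[of _ B]) (simp add: assms)
  have "matrix_inv A = matrix_inv A ** (A ** B)" using assms by simp
  also have "\<dots> = (matrix_inv A ** A) ** B" by (simp add: matrix_mul_assoc)
  also have "\<dots> = B" using ex by simp
  finally show ?thesis .
qed

lemma SO5_inv: "h \<in> SO5 \<Longrightarrow> matrix_inv h = transpose h"
  unfolding SO5_def orthogonal_matrix_def by (intro inv_unique) auto

lemma sum_delta_l: "(\<Sum>k\<in>(UNIV::5 set). (if i = k then a k else 0) * (f k::real)) = a i * f i"
proof -
  have "(\<Sum>k\<in>(UNIV::5 set). (if i = k then a k else 0) * f k) = (\<Sum>k\<in>UNIV. if i = k then a k * f k else 0)"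
    by (rule sum.cong) auto
  then show ?thesis by simp
qed
lemma sum_delta_r: "(\<Sum>k\<in>(UNIV::5 set). (f k::real) * (if k = j then a k else 0)) = f j * a j"
proof -
  have "(\<Sum>k\<in>(UNIV::5 set). f k * (if k = j then a k else 0)) = (\<Sum>k\<in>UNIV. if k = j then f k * a k else 0)"
    by (rule sum.cong) auto
  then show ?thesis by simp
qed

definition dg :: "(5 \<Rightarrow> real) \<Rightarrow> mat5" where "dg d = (\<chi> i j. if i = j then d i else 0)"

lemma dg_mult_left: "dg d ** X = (\<chi> i j. d i * X$i$j)"
  unfolding dg_def matrix_matrix_mult_def vec_eq_iff
  by (simp add: sum_delta_l)

lemma dg_mult_right: "X ** dg d = (\<chi> i j. X$i$j * d j)"
  unfolding dg_def matrix_matrix_mult_def vec_eq_iff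
  by (simp add: sum_delta_r)

lemma dg_transpose: "transpose (dg d) = dg d"
  unfolding dg_def transpose_def vec_eq_iff by auto

lemma dg_sq: assumes "\<And>i. d i * d i = 1" shows "dg d ** dg d = mat 1"
  unfolding dg_mult_left unfolding dg_def mat_def vec_eq_iff using assms by auto

lemma dg_det: "det (dg d) = d 1 * d 2 * d 3 * d 4 * d 5"
proof -
  have "det (dg d) = prod d UNIV" by (subst det_diagonal) (simp_all add: dg_def)
  also have "\<dots> = d 1 * d 2 * d 3 * d 4 * d 5" unfolding UNIV_5 by simp
  finally show ?thesis .
qed

lemma dg_axis: "d k = 1 \<Longrightarrow> dg d *v axis k 1 = axis k 1"
  unfolding dg_def matrix_vector_mult_def axis_def vec_eq_iff
  by (simp add: sum_delta_l)

lemma dg_SO3sub: assumes "\<And>i. d i * d i = 1" "d 1 = 1" "d 2 = 1" "d 1 * d 2 * d 3 * d 4 * d 5 = 1"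
  shows "dg d \<in> SO3sub"
  unfolding SO3sub_def SO5_def orthogonal_matrix_def
  using assms by (simp add: dg_transpose dg_sq dg_det dg_axis idx_simps)

lemma dg_Ad: assumes "\<And>i. d i * d i = 1" shows "Ad (dg d) X = (\<chi> i j. d i * X$i$j * d j)"
proof -
  have "matrix_inv (dg d) = dg d" by (rule inv_unique) (simp_all add: dg_sq assms)
  then show ?thesis unfolding Ad_def by (simp add: dg_mult_left dg_mult_right)
qed

definition d1 :: "5 \<Rightarrow> real" where "d1 i = (if i = 3 \<or> i = 4 then -1 else 1)"
definition d2 :: "5 \<Rightarrow> real" where "d2 i = (if i = 3 \<or> i = 5 then -1 else 1)"

lemma d1_SO3: "dg d1 \<in> SO3sub" by (rule dg_SO3sub) (simp_all add: d1_def)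
lemma d2_SO3: "dg d2 \<in> SO3sub" by (rule dg_SO3sub) (simp_all add: d2_def)

lemma conj_Emat: "(\<chi> i j. d i * Emat a b $i$j * d j) = (d (idx a) * d (idx b)) *\<^sub>R Emat a b"
  unfolding Emat_def vec_eq_iff by auto

lemma conj_ebas: assumes "\<And>i. d i * d i = 1"
  shows "Ad (dg d) (ebas k) = (d (idx (fst (bpos k))) * d (idx (snd (bpos k)))) *\<^sub>R ebas k"
proof -
  have D: "(\<chi> i j. d i * (A - B)$i$j * d j) = (\<chi> i j. d i * A$i$j * d j) - (\<chi> i j. d i * B$i$j * d j)" for A B :: mat5
    unfolding vec_eq_iff by (simp add: algebra_simps)
  show ?thesis unfolding dg_Ad[OF assms] ebas_def D conj_Emat scaleR_diff_right
    by (simp add: mult.commute)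
qed

lemma d1_Ad: "k \<in> {2,3,5,6} \<Longrightarrow> Ad (dg d1) (ebas k) = - ebas k"
  apply (subst conj_ebas) apply (simp add: d1_def)
  by (auto simp: d1_def bpos_def idx_simps)
lemma d2_Ad: "k \<in> {4,7} \<Longrightarrow> Ad (dg d2) (ebas k) = - ebas k"
  apply (subst conj_ebas) apply (simp add: d2_def)
  by (auto simp: d2_def bpos_def idx_simps)

lemma sd1: "(\<Sum>k\<in>(UNIV::5 set). (if k = i then 1 else 0) * (f k::real)) = f i"
proof -
  have "(\<Sum>k\<in>(UNIV::5 set). (if k = i then 1 else 0) * f k) = (\<Sum>k\<in>UNIV. if k = i then f k else 0)"
    by (rule sum.cong) auto
  then show ?thesis by simp
qed
lemma sd2: "(\<Sum>k\<in>(UNIV::5 set). (f k::real) * (if k = i then 1 else 0)) = f i"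
proof -
  have "(\<Sum>k\<in>(UNIV::5 set). f k * (if k = i then 1 else 0)) = (\<Sum>k\<in>UNIV. if k = i then f k else 0)"
    by (rule sum.cong) auto
  then show ?thesis by simp
qed

lemma col_entry: "(transpose A *v axis k 1)$j = (A::mat5)$k$j"
  unfolding transpose_def matrix_vector_mult_def axis_def by (simp add: sd2)

lemma SO3sub_rows: assumes "h \<in> SO3sub"
  shows "h$1$j = (if j = 1 then 1 else 0)" "h$2$j = (if j = 2 then 1 else 0)"
proof -
  have o: "transpose h ** h = mat 1" and f1: "h *v axis 1 1 = axis 1 1" and f2: "h *v axis 2 1 = axis 2 1"
    using assms unfolding SO3sub_def SO5_def orthogonal_matrix_def by (auto simp: idx_simps)
  have "transpose h *v axis 1 1 = axis 1 1"
    by (metis f1 o matrix_vector_mul_assoc matrix_vector_mul_lid)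
  then have "(transpose h *v axis 1 1)$j = axis 1 1 $ j" by simp
  then show "h$1$j = (if j = 1 then 1 else 0)" unfolding col_entry by (simp add: axis_def)
  have "transpose h *v axis 2 1 = axis 2 1"
    by (metis f2 o matrix_vector_mul_assoc matrix_vector_mul_lid)
  then have "(transpose h *v axis 2 1)$j = axis 2 1 $ j" by simp
  then show "h$2$j = (if j = 2 then 1 else 0)" unfolding col_entry by (simp add: axis_def)
qed

lemma edual1_Ad: assumes "h \<in> SO3sub" shows "edual 1 (Ad h X) = edual 1 X"
proof -
  have "h \<in> SO5" using assms unfolding SO3sub_def by auto
  then have "Ad h X = (h ** X) ** transpose h" unfolding Ad_def by (simp add: SO5_inv)
  then show ?thesis
    unfolding edual_def ent_def
    by (simp add: bpos_def idx_simps matrix_matrix_mult_def transpose_def SO3sub_rows[OF assms] sd1 sd2)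
qed

lemma mat_neg_r: "(A::mat5) ** (- B) = - (A ** B)"
  unfolding matrix_matrix_mult_def vec_eq_iff by (simp add: sum_negf)

lemma mat_neg_l: "(- A::mat5) ** B = - (A ** B)"
  unfolding matrix_matrix_mult_def vec_eq_iff by (simp add: sum_negf)

lemma Ad_skew: assumes "h \<in> SO5" "skew X" shows "skew (Ad h X)"
proof -
  have "Ad h X = h ** X ** transpose h" unfolding Ad_def by (simp add: SO5_inv assms)
  moreover have "transpose (h ** X ** transpose h) = - (h ** X ** transpose h)"
    using assms(2) unfolding skew_def
    by (simp add: matrix_transpose_mul matrix_mul_assoc mat_neg_r mat_neg_l)
  ultimately show ?thesis unfolding skew_def by simp
qed

lemma skew_bracket: "skew X \<Longrightarrow> skew Y \<Longrightarrow> skew (bracket X Y)"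
  unfolding skew_def bracket_def transpose_diff' matrix_transpose_mul
  by (simp add: mat_neg_r mat_neg_l)


lemma edual1_bracket: assumes "skew X" "skew Y" shows "edual 1 (bracket X Y) = - omega X Y"
proof -
  have p: "(A ** B)$1$2 = A$1$1*B$1$2 + A$1$2*B$2$2 + A$1$3*B$3$2 + A$1$4*B$4$2 + A$1$5*B$5$2" for A B :: mat5
    unfolding matrix_matrix_mult_def UNIV_5 by (simp add: add.assoc)
  have e: "edual 1 (bracket X Y) = (X ** Y)$1$2 - (Y ** X)$1$2"
    unfolding bracket_def edual_def ent_def by (simp add: bpos_def idx_simps)
  have o: "omega X Y = (X$1$3 * Y$2$3 - X$2$3 * Y$1$3) + (X$1$4 * Y$2$4 - X$2$4 * Y$1$4) + (X$1$5 * Y$2$5 - X$2$5 * Y$1$5)"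
    unfolding omega_def wedge2_def edual_def ent_def by (simp add: bpos_def idx_simps)
  show ?thesis unfolding e o p skew_insts[OF assms(1)] skew_insts[OF assms(2)]
    by (simp add: algebra_simps)
qed

lemma so3_coords: assumes "w \<in> so3" shows "\<exists>b8 b9 b10. w = b8 *\<^sub>R ebas 8 + b9 *\<^sub>R ebas 9 + b10 *\<^sub>R ebas 10"
proof -
  have e: "ebas ` {8..10} = {ebas 8, ebas 9, ebas 10}"
  proof -
    have "{8..10::nat} = {8,9,10}" by auto
    then show ?thesis by simp
  qed
  from assms obtain b8 where "w - b8 *\<^sub>R ebas 8 \<in> span {ebas 9, ebas 10}"
    unfolding so3_def e span_breakdown_eq by auto
  then obtain b9 where "w - b8 *\<^sub>R ebas 8 - b9 *\<^sub>R ebas 9 \<in> span {ebas 10}"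
    unfolding span_breakdown_eq by auto
  then obtain b10 where "w - b8 *\<^sub>R ebas 8 - b9 *\<^sub>R ebas 9 - b10 *\<^sub>R ebas 10 \<in> span {}"
    unfolding span_breakdown_eq by auto
  then show ?thesis by (intro exI[of _ b8] exI[of _ b9] exI[of _ b10]) (simp add: algebra_simps)
qed

lemma Ad_id: "Ad (mat 1) Y = Y"
proof -
  have "matrix_inv (mat 1 :: mat5) = mat 1" by (rule inv_unique) simp_all
  then show ?thesis unfolding Ad_def by simp
qed

lemma ebas_so5: "k \<in> {1..10} \<Longrightarrow> ebas k \<in> so5"
  unfolding so5_def by (rule span_base) auto
lemma ebas_so3: "k \<in> {8..10} \<Longrightarrow> ebas k \<in> so3"
  unfolding so3_def by (rule span_base) auto
lemma so3_so5: "so3 \<subseteq> so5"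
  unfolding so3_def so5_def by (rule span_mono) auto
lemma mspace_so5: "mspace \<subseteq> so5"
  unfolding mspace_def so5_def by (rule span_mono) auto

lemma so3_edual1: "X \<in> so3 \<Longrightarrow> edual 1 X = 0"
  unfolding so3_def
proof (induct rule: span_induct_alt)
  case base then show ?case by (simp add: edual_def ent_def)
next
  case (step c x y)
  then obtain k where k: "k \<in> {8..10}" "x = ebas k" by auto
  then have "edual 1 x = 0" using edual1_ebas[of k] by auto
  with step show ?case by (simp add: edual_def ent_def)
qed


lemma forward:
  fixes \<alpha> :: "mat5 \<Rightarrow> mat5"
  assumes lin: "linear \<alpha>" and into: "\<forall>X\<in>so5. \<alpha> X \<in> so3"
    and W: "wang_connection phi0 phi0d \<alpha>"
  shows "\<exists>b8 b9 b10 :: real. \<forall>X\<in>so5.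
              \<alpha> X = edual 1 X *\<^sub>R (b8 *\<^sub>R ebas 8 + b9 *\<^sub>R ebas 9 + b10 *\<^sub>R ebas 10)"
proof -
  have A1: "\<And>X. X \<in> so3 \<Longrightarrow> \<alpha> X = 0" and A2: "\<And>h X. h \<in> SO3sub \<Longrightarrow> X \<in> so5 \<Longrightarrow> \<alpha> (Ad h X) = \<alpha> X"
    using W unfolding wang_connection_def phi0_def phi0d_def Ad_id by auto
  have neg0: "\<alpha> (ebas k) = 0" if "h \<in> SO3sub" "Ad h (ebas k) = - ebas k" "k \<in> {1..10}" for h k
  proof -
    have "\<alpha> (ebas k) = \<alpha> (- ebas k)" using A2[OF that(1) ebas_so5[OF that(3)]] that(2) by simp
    also have "\<dots> = - \<alpha> (ebas k)" by (rule linear_neg[OF lin])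
    finally have e: "\<alpha> (ebas k) = - \<alpha> (ebas k)" .
    have "(2::real) *\<^sub>R \<alpha> (ebas k) = \<alpha> (ebas k) + \<alpha> (ebas k)" by (rule scaleR_2)
    also have "\<dots> = 0" using e by (metis add.right_inverse)
    finally show ?thesis by simp
  qed
  have Z: "\<alpha> (ebas k) = 0" if "k \<in> {2..10}" for k
  proof -
    from that have "k \<in> {2,3,5,6} \<or> k \<in> {4,7} \<or> k \<in> {8..10}" by auto
    then show ?thesis
    proof (elim disjE)
      assume "k \<in> {2,3,5,6}" then show ?thesis using neg0[OF d1_SO3 d1_Ad] by auto
    next
      assume "k \<in> {4,7}" then show ?thesis using neg0[OF d2_SO3 d2_Ad] by auto
    next
      assume "k \<in> {8..10}" then show ?thesis using A1 ebas_so3 by auto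
    qed
  qed
  define w where "w = \<alpha> (ebas 1)"
  have "w \<in> so3" unfolding w_def using into ebas_so5[of 1] by auto
  then obtain b8 b9 b10 where wb: "w = b8 *\<^sub>R ebas 8 + b9 *\<^sub>R ebas 9 + b10 *\<^sub>R ebas 10"
    using so3_coords by blast
  have "\<alpha> X = edual 1 X *\<^sub>R w" if "X \<in> so5" for X
    using that unfolding so5_def
  proof (induct rule: span_induct_alt)
    case base then show ?case by (simp add: edual_def ent_def linear_0[OF lin])
  next
    case (step c x y)
    then obtain k where k: "k \<in> {1..10}" "x = ebas k" by auto
    have "\<alpha> x = edual 1 x *\<^sub>R w"
    proof (cases "k = 1")
      case True
      have x1: "x = ebas 1" using k True by simp
      have e1: "edual 1 (ebas 1) = 1" using edual1_ebas[of 1] by simp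
      show ?thesis unfolding x1 e1 w_def by simp
    next
      case False then show ?thesis using k Z[of k] edual1_ebas[of k] by auto
    qed
    then show ?case using step(2)
      by (simp add: linear_add[OF lin] linear_scale[OF lin] edual_def ent_def scaleR_add_left)
  qed
  then show ?thesis using wb by blast
qed

theorem lemma4p4:
  fixes \<alpha> :: "mat5 \<Rightarrow> mat5"
  assumes "linear \<alpha>"
    and "\<forall>X\<in>so5. \<alpha> X \<in> so3"
  shows "(wang_connection phi0 phi0d \<alpha> \<longleftrightarrow>
           (\<exists>b8 b9 b10 :: real. \<forall>X\<in>so5.
              \<alpha> X = edual 1 X *\<^sub>R (b8 *\<^sub>R ebas 8 + b9 *\<^sub>R ebas 9 + b10 *\<^sub>R ebas 10)))
       \<and> (wang_connection phi0 phi0d \<alpha> \<longrightarrow>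
           (\<exists>v\<in>so3. \<forall>X\<in>mspace. \<forall>Y\<in>mspace. curvature \<alpha> X Y = omega X Y *\<^sub>R v))"
proof -
  have bk: "wang_connection phi0 phi0d \<alpha>"
    if H: "\<forall>X\<in>so5. \<alpha> X = edual 1 X *\<^sub>R w" for w
  proof -
    have "\<forall>X\<in>so3. \<alpha> X = phi0d X"
    proof
      fix X assume X: "X \<in> so3"
      then have X5: "X \<in> so5" using so3_so5 by blast
      have "\<alpha> X = edual 1 X *\<^sub>R w" using H X5 by (rule bspec)
      then show "\<alpha> X = phi0d X" unfolding phi0d_def so3_edual1[OF X] by simp
    qed
    moreover have "\<alpha> (Ad h X) = Ad (phi0 h) (\<alpha> X)" if "h \<in> SO3sub" "X \<in> so5" for h X
    proof -
      have "h \<in> SO5" using that(1) unfolding SO3sub_def by auto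
      then have "Ad h X \<in> so5" by (rule skew_so5[OF Ad_skew[OF _ so5_skew[OF that(2)]]])
      with H have "\<alpha> (Ad h X) = edual 1 (Ad h X) *\<^sub>R w" by (rule bspec)
      also have "\<dots> = edual 1 X *\<^sub>R w" unfolding edual1_Ad[OF that(1)] ..
      also have "\<dots> = \<alpha> X" using bspec[OF H that(2)] by (rule sym)
      finally show ?thesis unfolding phi0_def Ad_id .
    qed
    ultimately show ?thesis unfolding wang_connection_def by blast
  qed
  have curv: "\<exists>v\<in>so3. \<forall>X\<in>mspace. \<forall>Y\<in>mspace. curvature \<alpha> X Y = omega X Y *\<^sub>R v"
    if W: "wang_connection phi0 phi0d \<alpha>"
  proof -
    obtain b8 b9 b10 where H: "\<forall>X\<in>so5. \<alpha> X = edual 1 X *\<^sub>R (b8 *\<^sub>R ebas 8 + b9 *\<^sub>R ebas 9 + b10 *\<^sub>R ebas 10)"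
      using forward[OF assms W] by blast
    define w where "w = b8 *\<^sub>R ebas 8 + b9 *\<^sub>R ebas 9 + b10 *\<^sub>R ebas 10"
    have ws: "w \<in> so3" unfolding w_def so3_def
      by (intro span_add span_scale span_base; simp)
    have "curvature \<alpha> X Y = omega X Y *\<^sub>R w" if "X \<in> mspace" "Y \<in> mspace" for X Y
    proof -
      have X: "X \<in> so5" and Y: "Y \<in> so5" using that mspace_so5 by auto
      have B: "bracket X Y \<in> so5" by (rule skew_so5[OF skew_bracket[OF so5_skew[OF X] so5_skew[OF Y]]])
      have aX: "\<alpha> X = edual 1 X *\<^sub>R w" and aY: "\<alpha> Y = edual 1 Y *\<^sub>R w"
        and aB: "\<alpha> (bracket X Y) = edual 1 (bracket X Y) *\<^sub>R w"
        using H X Y B unfolding w_def by blast+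
      have "bracket (\<alpha> X) (\<alpha> Y) = 0"
        unfolding aX aY bracket_def
        by (simp add: matrix_scalar_ac scalar_matrix_assoc[symmetric])
      moreover have "\<alpha> (bracket X Y) = - omega X Y *\<^sub>R w"
        unfolding aB edual1_bracket[OF so5_skew[OF X] so5_skew[OF Y]] ..
      ultimately show ?thesis unfolding curvature_def by simp
    qed
    then show ?thesis using ws by blast
  qed
  have "wang_connection phi0 phi0d \<alpha> \<longleftrightarrow>
           (\<exists>b8 b9 b10 :: real. \<forall>X\<in>so5.
              \<alpha> X = edual 1 X *\<^sub>R (b8 *\<^sub>R ebas 8 + b9 *\<^sub>R ebas 9 + b10 *\<^sub>R ebas 10))"
  proof
    assume "wang_connection phi0 phi0d \<alpha>"
    then show "\<exists>b8 b9 b10 :: real. \<forall>X\<in>so5.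
              \<alpha> X = edual 1 X *\<^sub>R (b8 *\<^sub>R ebas 8 + b9 *\<^sub>R ebas 9 + b10 *\<^sub>R ebas 10)"
      by (rule forward[OF assms])
  next
    assume "\<exists>b8 b9 b10 :: real. \<forall>X\<in>so5.
              \<alpha> X = edual 1 X *\<^sub>R (b8 *\<^sub>R ebas 8 + b9 *\<^sub>R ebas 9 + b10 *\<^sub>R ebas 10)"
    then obtain b8 b9 b10 where "\<forall>X\<in>so5.
              \<alpha> X = edual 1 X *\<^sub>R (b8 *\<^sub>R ebas 8 + b9 *\<^sub>R ebas 9 + b10 *\<^sub>R ebas 10)" by blast
    then show "wang_connection phi0 phi0d \<alpha>" by (rule bk)
  qed
  with curv show ?thesis by blast
qed
end
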